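(* Let $s\ge 0$ and $\Gamma_1,\Gamma_2\subseteq\{0,1\}^\infty$. If a learning function $l_1$ $s$-learns every $X\in\Gamma_1$ and a learning function $l_2$ $s$-learns every $X\in\Gamma_2$, then there exists a learning function $l_3$ that $s$-learns every $X\in\Gamma_1\cup\Gamma_2$.
   Context: A learning function is a function $l:\{0,1\}^*\to\{0,1\}$ (identifying yes with $1$ and no with $0$). $Y\upharpoonright i$ is the length-$i$ prefix of $Y$; $\lambda$ is the uniform (Lebesgue) measure on $\{0,1\}^\infty$. For a nonempty string $w$, the path average is $\mathrm{AVG}_l(w)=\frac{1}{|w|}\sum_{i=0}^{|w|} l(w\upharpoonright i)$. A learning function $l$ satisfies the measure condition if for all $n\in\mathbb N$, $\lambda(\{Y\in\{0,1\}^\infty : \#\{i\in\mathbb N: l(Y\upharpoonright i)=1\}\ge n\})\le 2^{-n}$. For $s\ge0$, $l$ $s$-learns $X$ iff $l$ satisfies the measure condition and $\limsup_{n\to\infty}\mathrm{AVG}_l(X\upharpoonright n)\ge 1-s$ (no computability restriction on $l$). *)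

theory Defs
  imports "HOL-Probability.Probability"
begin

text \<open>Infinite binary sequences are modelled as nat => bool, finite strings as bool list,
  with True = 1 and False = 0.\<close>

type_synonym learning_function = "bool list \<Rightarrow> bool"

definition pref :: "(nat \<Rightarrow> bool) \<Rightarrow> nat \<Rightarrow> bool list" where
  "pref Y i = map Y [0..<i]"

definition lam :: "(nat \<Rightarrow> bool) measure" where
  "lam = (\<Pi>\<^sub>M i\<in>(UNIV::nat set). measure_pmf (bernoulli_pmf (1/2)))"

definition AVG :: "learning_function \<Rightarrow> bool list \<Rightarrow> real" where
  "AVG l w = (1 / real (length w)) * (\<Sum>i=0..length w. if l (take i w) then 1 else 0)"

definition yes_set :: "learning_function \<Rightarrow> (nat \<Rightarrow> bool) \<Rightarrow> nat set" where
  "yes_set l Y = {i. l (pref Y i)}"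

definition measure_condition :: "learning_function \<Rightarrow> bool" where
  "measure_condition l \<longleftrightarrow>
     (\<forall>n::nat. emeasure lam {Y \<in> space lam. infinite (yes_set l Y) \<or> n \<le> card (yes_set l Y)}
                \<le> ennreal ((1/2) ^ n))"

definition s_learns :: "real \<Rightarrow> learning_function \<Rightarrow> (nat \<Rightarrow> bool) \<Rightarrow> bool" where
  "s_learns s l X \<longleftrightarrow> measure_condition l \<and>
     limsup (\<lambda>n. ereal (AVG l (pref X n))) \<ge> ereal (1 - s)"

end

theory Submission
  imports Defs
begin

definition Cnt :: "learning_function \<Rightarrow> bool list \<Rightarrow> nat" where
  "Cnt l w = card {i. i \<le> length w \<and> l (take i w)}"

definition Mx :: "learning_function \<Rightarrow> learning_function \<Rightarrow> bool list \<Rightarrow> nat" where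
  "Mx l1 l2 w = max (Cnt l1 w) (Cnt l2 w)"

definition comb :: "learning_function \<Rightarrow> learning_function \<Rightarrow> learning_function" where
  "comb l1 l2 w = (2 \<le> Mx l1 l2 w \<and> Mx l1 l2 (butlast w) < Mx l1 l2 w)"

lemma Cnt_Nil: "Cnt l [] = (if l [] then 1 else 0)"
proof -
  have "{i. i \<le> 0 \<and> l (take i [])} = (if l [] then {0} else {})" by auto
  then show ?thesis unfolding Cnt_def by simp
qed

lemma Cnt_snoc: "Cnt l (w @ [a]) = Cnt l w + (if l (w @ [a]) then 1 else 0)"
proof -
  have "{i. i \<le> length (w@[a]) \<and> l (take i (w@[a]))} =
        {i. i \<le> length w \<and> l (take i w)} \<union> (if l (w@[a]) then {Suc (length w)} else {})"
    by (auto simp: le_Suc_eq)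
  moreover have "finite {i. i \<le> length w \<and> l (take i w)}" by simp
  ultimately show ?thesis unfolding Cnt_def by auto
qed

lemma Cnt_comb: "Cnt (comb l1 l2) w = Mx l1 l2 w - 1"
proof (induction w rule: rev_induct)
  case Nil
  have "\<not> comb l1 l2 []" by (simp add: comb_def)
  then show ?case by (simp add: Cnt_Nil Mx_def)
next
  case (snoc a w)
  have "Mx l1 l2 w \<le> Mx l1 l2 (w@[a])" "Mx l1 l2 (w@[a]) \<le> Mx l1 l2 w + 1"
    by (auto simp: Mx_def Cnt_snoc)
  then show ?case using snoc by (auto simp: Cnt_snoc comb_def)
qed

lemma length_pref[simp]: "length (pref Y m) = m" by (simp add: pref_def)

lemma pref_take: "i \<le> m \<Longrightarrow> take i (pref Y m) = pref Y i"
  by (simp add: pref_def take_map)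

lemma Cnt_pref: "Cnt l (pref Y m) = card {i. i \<le> m \<and> i \<in> yes_set l Y}"
  unfolding Cnt_def yes_set_def
  by (rule arg_cong[where f=card]) (auto simp: pref_take)

lemma set_count: "(infinite S \<or> n \<le> card S) \<longleftrightarrow> (\<exists>m. n \<le> card {i::nat. i \<le> m \<and> i \<in> S})"
proof
  assume "infinite S \<or> n \<le> card S"
  then obtain F where F: "finite F" "F \<subseteq> S" "n \<le> card F"
    using infinite_arbitrarily_large by (metis order_refl card.infinite le_zero_eq finite.emptyI empty_subsetI)
  define m where "m = Max (insert 0 F)"
  have "F \<subseteq> {i. i \<le> m \<and> i \<in> S}" using F by (auto simp: m_def)
  moreover have "finite {i. i \<le> m \<and> i \<in> S}" by simp
  ultimately have "card F \<le> card {i. i \<le> m \<and> i \<in> S}" by (rule card_mono[rotated])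
  then show "\<exists>m. n \<le> card {i::nat. i \<le> m \<and> i \<in> S}" using F by (intro exI[of _ m]) linarith
next
  assume "\<exists>m. n \<le> card {i::nat. i \<le> m \<and> i \<in> S}"
  then obtain m where m: "n \<le> card {i::nat. i \<le> m \<and> i \<in> S}" by blast
  show "infinite S \<or> n \<le> card S"
  proof (cases "finite S")
    case True
    then have "card {i::nat. i \<le> m \<and> i \<in> S} \<le> card S" by (intro card_mono) auto
    then show ?thesis using m by auto
  qed auto
qed

lemma meas_pref: "(\<lambda>Y. pref Y m) \<in> measurable lam (count_space UNIV)"
proof (induction m)
  case 0
  then show ?case by (simp add: pref_def)
next
  case (Suc m)
  have comp: "(\<lambda>Y. Y m) \<in> measurable lam (count_space UNIV)"
  proof -
    have "(\<lambda>Y. Y m) \<in> measurable lam (measure_pmf (bernoulli_pmf (1/2)))"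
      unfolding lam_def by (rule measurable_component_singleton) simp
    moreover have "measurable lam (measure_pmf (bernoulli_pmf (1/2))) = measurable lam (count_space UNIV)"
      by (rule measurable_cong_sets) auto
    ultimately show ?thesis by simp
  qed
  have eq: "(\<lambda>Y. pref Y (Suc m)) = (\<lambda>Y. (\<lambda>(w,b). w @ [b]) (pref Y m, Y m))"
    by (auto simp: pref_def)
  show ?case unfolding eq using Suc comp by measurable
qed

lemma T_eq: "{Y \<in> space lam. infinite (yes_set l Y) \<or> n \<le> card (yes_set l Y)}
   = (\<Union>m. (\<lambda>Y. pref Y m) -` {w. n \<le> Cnt l w} \<inter> space lam)"
proof (rule set_eqI)
  fix Y show "Y \<in> {Y \<in> space lam. infinite (yes_set l Y) \<or> n \<le> card (yes_set l Y)} \<longleftrightarrow>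
     Y \<in> (\<Union>m. (\<lambda>Y. pref Y m) -` {w. n \<le> Cnt l w} \<inter> space lam)"
    using set_count[of "yes_set l Y" n] by (auto simp: Cnt_pref)
qed

lemma T_sets: "{Y \<in> space lam. infinite (yes_set l Y) \<or> n \<le> card (yes_set l Y)} \<in> sets lam"
  unfolding T_eq
proof (intro sets.countable_UN subsetI)
  fix A assume "A \<in> range (\<lambda>m. (\<lambda>Y. pref Y m) -` {w. n \<le> Cnt l w} \<inter> space lam)"
  then obtain m where "A = (\<lambda>Y. pref Y m) -` {w. n \<le> Cnt l w} \<inter> space lam" by blast
  then show "A \<in> sets lam" using measurable_sets[OF meas_pref, of "{w. n \<le> Cnt l w}" m] by simp
qed

lemma mc_comb:
  assumes "measure_condition l1" "measure_condition l2"
  shows "measure_condition (comb l1 l2)"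
  unfolding measure_condition_def
proof
  fix n :: nat
  let ?T = "\<lambda>l n. {Y \<in> space lam. infinite (yes_set l Y) \<or> n \<le> card (yes_set l Y)}"
  have ps: "prob_space lam" unfolding lam_def by (intro prob_space_PiM) (simp add: prob_space_measure_pmf)
  show "emeasure lam (?T (comb l1 l2) n) \<le> ennreal ((1/2)^n)"
  proof (cases n)
    case 0
    then show ?thesis using prob_space.emeasure_le_1[OF ps] by simp
  next
    case (Suc k)
  have sub: "?T (comb l1 l2) n \<subseteq> ?T l1 (Suc n) \<union> ?T l2 (Suc n)"
  proof
    fix Y assume "Y \<in> ?T (comb l1 l2) n"
    then obtain m where "n \<le> Cnt (comb l1 l2) (pref Y m)" "Y \<in> space lam"
      unfolding T_eq by auto
    then have "Suc n \<le> Cnt l1 (pref Y m) \<or> Suc n \<le> Cnt l2 (pref Y m)"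
      using Suc by (auto simp: Cnt_comb Mx_def)
    then show "Y \<in> ?T l1 (Suc n) \<union> ?T l2 (Suc n)" unfolding T_eq using \<open>Y \<in> space lam\<close> by auto
  qed
  have "emeasure lam (?T (comb l1 l2) n) \<le> emeasure lam (?T l1 (Suc n) \<union> ?T l2 (Suc n))"
    by (rule emeasure_mono[OF sub]) (intro sets.Un T_sets)
  also have "\<dots> \<le> emeasure lam (?T l1 (Suc n)) + emeasure lam (?T l2 (Suc n))"
    by (rule emeasure_subadditive) (rule T_sets)+
  also have "\<dots> \<le> ennreal ((1/2)^Suc n) + ennreal ((1/2)^Suc n)"
    using assms unfolding measure_condition_def by (intro add_mono) blast+
  also have "\<dots> = ennreal ((1/2)^n)"
    by (simp flip: ennreal_plus)
  finally show "emeasure lam (?T (comb l1 l2) n) \<le> ennreal ((1/2)^n)" .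
  qed
qed

lemma AVG_Cnt: "AVG l w = real (Cnt l w) / real (length w)"
proof -
  have "(\<Sum>i=0..length w. if l (take i w) then 1 else 0) = (\<Sum>i\<in>{i\<in>{0..length w}. l (take i w)}. (1::real))"
    by (rule sum.inter_filter[symmetric]) simp
  also have "\<dots> = real (Cnt l w)" unfolding Cnt_def
  proof -
    have "{i\<in>{0..length w}. l (take i w)} = {i. i \<le> length w \<and> l (take i w)}" by auto
    then show "(\<Sum>i\<in>{i\<in>{0..length w}. l (take i w)}. (1::real)) = real (card {i. i \<le> length w \<and> l (take i w)})"
      by simp
  qed
  finally show ?thesis unfolding AVG_def by simp
qed

lemma AVG_comb: "AVG l1 w \<le> AVG (comb l1 l2) w + 1 / real (length w)"
  "AVG l2 w \<le> AVG (comb l1 l2) w + 1 / real (length w)"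
proof -
  have a: "real (Cnt l1 w) \<le> real (Cnt (comb l1 l2) w) + 1" "real (Cnt l2 w) \<le> real (Cnt (comb l1 l2) w) + 1"
    by (auto simp: Cnt_comb Mx_def)
  show "AVG l1 w \<le> AVG (comb l1 l2) w + 1 / real (length w)"
    unfolding AVG_Cnt add_divide_distrib[symmetric] by (rule divide_right_mono[OF a(1)]) simp
  show "AVG l2 w \<le> AVG (comb l1 l2) w + 1 / real (length w)"
    unfolding AVG_Cnt add_divide_distrib[symmetric] by (rule divide_right_mono[OF a(2)]) simp
qed

lemma limsup_transfer:
  assumes "\<And>n. f n \<le> g n + 1 / real n"
  shows "limsup (\<lambda>n. ereal (f n)) \<le> limsup (\<lambda>n. ereal (g n))"
proof -
  have "limsup (\<lambda>n. ereal (f n)) \<le> limsup (\<lambda>n. ereal (g n) + ereal (1 / real n))"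
    using assms by (intro Limsup_mono always_eventually) simp
  also have "\<dots> \<le> limsup (\<lambda>n. ereal (g n)) + limsup (\<lambda>n. ereal (1 / real n))"
    by (rule ereal_limsup_add_mono)
  also have "limsup (\<lambda>n. ereal (1 / real n)) = 0"
  proof -
    have "((\<lambda>n. ereal (1 / real n)) \<longlongrightarrow> ereal 0) sequentially"
      by (intro tendsto_ereal lim_1_over_n)
    then show ?thesis by (simp add: lim_imp_Limsup zero_ereal_def)
  qed
  finally show ?thesis by simp
qed

theorem mainTheorem4:
  fixes s :: real and \<Gamma>1 \<Gamma>2 :: "(nat \<Rightarrow> bool) set" and l1 l2 :: learning_function
  assumes "s \<ge> 0"
    and "\<forall>X\<in>\<Gamma>1. s_learns s l1 X"
    and "\<forall>X\<in>\<Gamma>2. s_learns s l2 X"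
  shows "\<exists>l3 :: learning_function. \<forall>X\<in>\<Gamma>1 \<union> \<Gamma>2. s_learns s l3 X"
proof (cases "\<Gamma>1 = {} \<or> \<Gamma>2 = {}")
  case True
  then show ?thesis using assms by auto
next
  case False
  then have mc: "measure_condition l1" "measure_condition l2"
    using assms unfolding s_learns_def by auto
  show ?thesis
  proof (intro exI ballI)
    fix X assume X: "X \<in> \<Gamma>1 \<union> \<Gamma>2"
    have "ereal (1 - s) \<le> limsup (\<lambda>n. ereal (AVG (comb l1 l2) (pref X n)))"
    proof (cases "X \<in> \<Gamma>1")
      case True
      then have "ereal (1 - s) \<le> limsup (\<lambda>n. ereal (AVG l1 (pref X n)))"
        using assms unfolding s_learns_def by auto
      also have "\<dots> \<le> limsup (\<lambda>n. ereal (AVG (comb l1 l2) (pref X n)))"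
        by (rule limsup_transfer) (metis AVG_comb(1) length_pref)
      finally show ?thesis .
    next
      case False
      then have "ereal (1 - s) \<le> limsup (\<lambda>n. ereal (AVG l2 (pref X n)))"
        using X assms unfolding s_learns_def by auto
      also have "\<dots> \<le> limsup (\<lambda>n. ereal (AVG (comb l1 l2) (pref X n)))"
        by (rule limsup_transfer) (metis AVG_comb(2) length_pref)
      finally show ?thesis .
    qed
    then show "s_learns s (comb l1 l2) X"
      unfolding s_learns_def using mc_comb[OF mc] by simp
  qed
qed

end
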